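(* There is an adjunction $M \dashv \mathrm{Idem}$ between the category $\mathrm{DLatt}_{lb}$ of lower bounded distributive lattices and the category $\mathrm{CAlg}^{nu}$ of non-unital commutative rings, where the left adjoint sends $D$ to its module of motives $M(D)$ with multiplication $[U]\cdot[V]=[U\wedge V]$, and the right adjoint sends a non-unital commutative ring $R$ to its set of idempotents $\mathrm{Idem}(R)=\{p\in R \mid p^2=p\}$ viewed as a lower bounded distributive lattice with bottom $0$, $p\wedge q = pq$ and $p\vee q = p+q-pq$.
   Context: A lower bounded distributive lattice is a distributive lattice with a bottom element $0$; morphisms in $\mathrm{DLatt}_{lb}$ are lattice homomorphisms preserving $0$. The module of motives $M(D)$ is the free abelian group $\mathbb{Z}[D]$ modulo the relations $[0]=0$ and $[U]+[V]=[U\vee V]+[U\wedge V]$ for all $U,V\in D$. *)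

theory Defs
  imports "HOL-Library.Poly_Mapping"
begin

text \<open>Lower bounded distributive lattices are types of sort {distrib_lattice, order_bot};
  Z[D] is the free abelian group (finitely supported 'a to int), with [U] = single U 1.\<close>

inductive_set motive_rel :: "('a::{distrib_lattice,order_bot} \<Rightarrow>\<^sub>0 int) set" where
  zero: "0 \<in> motive_rel"
| bot: "Poly_Mapping.single bot 1 \<in> motive_rel"
| mv: "Poly_Mapping.single U 1 + Poly_Mapping.single V 1
        - Poly_Mapping.single (sup U V) 1 - Poly_Mapping.single (inf U V) 1 \<in> motive_rel"
| add: "x \<in> motive_rel \<Longrightarrow> y \<in> motive_rel \<Longrightarrow> x + y \<in> motive_rel"
| neg: "x \<in> motive_rel \<Longrightarrow> - x \<in> motive_rel"

definition motive_equiv :: "(('a::{distrib_lattice,order_bot} \<Rightarrow>\<^sub>0 int) \<times> ('a \<Rightarrow>\<^sub>0 int)) set" where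
  "motive_equiv = {(x, y). x - y \<in> motive_rel}"

typedef (overloaded) ('a::"{distrib_lattice,order_bot}") motive = "(UNIV :: ('a \<Rightarrow>\<^sub>0 int) set) // motive_equiv"
  by (auto simp: quotient_def)

definition abs_motive :: "('a::{distrib_lattice,order_bot} \<Rightarrow>\<^sub>0 int) \<Rightarrow> 'a motive" where
  "abs_motive x = Abs_motive (motive_equiv `` {x})"

definition rep_motive :: "'a::{distrib_lattice,order_bot} motive \<Rightarrow> ('a \<Rightarrow>\<^sub>0 int)" where
  "rep_motive a = (SOME x. x \<in> Rep_motive a)"

definition motive_cls :: "'a::{distrib_lattice,order_bot} \<Rightarrow> 'a motive" where
  "motive_cls U = abs_motive (Poly_Mapping.single U 1)"

definition motive_zero :: "'a::{distrib_lattice,order_bot} motive" where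
  "motive_zero = abs_motive 0"

definition motive_plus :: "'a::{distrib_lattice,order_bot} motive \<Rightarrow> 'a motive \<Rightarrow> 'a motive" where
  "motive_plus a b = abs_motive (rep_motive a + rep_motive b)"

definition motive_uminus :: "'a::{distrib_lattice,order_bot} motive \<Rightarrow> 'a motive" where
  "motive_uminus a = abs_motive (- rep_motive a)"

definition motive_minus :: "'a::{distrib_lattice,order_bot} motive \<Rightarrow> 'a motive \<Rightarrow> 'a motive" where
  "motive_minus a b = abs_motive (rep_motive a - rep_motive b)"

text \<open>Bilinear extension of [U]*[V] = [inf U V] on Z[D].\<close>
definition free_motive_prod :: "('a::{distrib_lattice,order_bot} \<Rightarrow>\<^sub>0 int) \<Rightarrow> ('a \<Rightarrow>\<^sub>0 int) \<Rightarrow> ('a \<Rightarrow>\<^sub>0 int)" where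
  "free_motive_prod x y = (\<Sum>U\<in>Poly_Mapping.keys x. \<Sum>V\<in>Poly_Mapping.keys y.
      Poly_Mapping.single (inf U V) (Poly_Mapping.lookup x U * Poly_Mapping.lookup y V))"

definition motive_times :: "'a::{distrib_lattice,order_bot} motive \<Rightarrow> 'a motive \<Rightarrow> 'a motive" where
  "motive_times a b = abs_motive (free_motive_prod (rep_motive a) (rep_motive b))"

text \<open>Idempotents of a non-unital commutative ring (class comm_ring has no unit).\<close>
definition Idem :: "'r::comm_ring set" where
  "Idem = {p. p * p = p}"

definition lb_distrib_lattice_on :: "'b set \<Rightarrow> ('b \<Rightarrow> 'b \<Rightarrow> 'b) \<Rightarrow> ('b \<Rightarrow> 'b \<Rightarrow> 'b) \<Rightarrow> 'b \<Rightarrow> bool" where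
  "lb_distrib_lattice_on S meet join z \<longleftrightarrow>
     z \<in> S \<and> (\<forall>x\<in>S. \<forall>y\<in>S. meet x y \<in> S \<and> join x y \<in> S) \<and>
     (\<forall>x\<in>S. \<forall>y\<in>S. meet x y = meet y x \<and> join x y = join y x) \<and>
     (\<forall>x\<in>S. \<forall>y\<in>S. \<forall>w\<in>S. meet (meet x y) w = meet x (meet y w) \<and> join (join x y) w = join x (join y w)) \<and>
     (\<forall>x\<in>S. \<forall>y\<in>S. meet x (join x y) = x \<and> join x (meet x y) = x) \<and>
     (\<forall>x\<in>S. \<forall>y\<in>S. \<forall>w\<in>S. meet x (join y w) = join (meet x y) (meet x w)) \<and>
     (\<forall>x\<in>S. meet z x = z)"

definition idem_meet :: "'r::comm_ring \<Rightarrow> 'r \<Rightarrow> 'r" where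
  "idem_meet p q = p * q"

definition idem_join :: "'r::comm_ring \<Rightarrow> 'r \<Rightarrow> 'r" where
  "idem_join p q = p + q - p * q"

definition lat_hom_to_Idem :: "('a::{distrib_lattice,order_bot} \<Rightarrow> 'r::comm_ring) \<Rightarrow> bool" where
  "lat_hom_to_Idem f \<longleftrightarrow> (\<forall>U. f U \<in> Idem) \<and> f bot = 0 \<and>
     (\<forall>U V. f (inf U V) = idem_meet (f U) (f V) \<and> f (sup U V) = idem_join (f U) (f V))"

definition motive_ring_hom :: "('a::{distrib_lattice,order_bot} motive \<Rightarrow> 'r::comm_ring) \<Rightarrow> bool" where
  "motive_ring_hom \<phi> \<longleftrightarrow> (\<forall>a b. \<phi> (motive_plus a b) = \<phi> a + \<phi> b \<and> \<phi> (motive_times a b) = \<phi> a * \<phi> b)"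

end

theory Submission
  imports Defs
begin


definition natmul :: "nat \<Rightarrow> 'r::comm_ring \<Rightarrow> 'r" where
  "natmul n r = (\<Sum>i<n. r)"

lemma natmul_0 [simp]: "natmul 0 r = 0" by (simp add: natmul_def)
lemma natmul_Suc [simp]: "natmul (Suc n) r = natmul n r + r" by (simp add: natmul_def)

definition intmul :: "int \<Rightarrow> 'r::comm_ring \<Rightarrow> 'r" where
  "intmul k r = natmul (nat k) r - natmul (nat (-k)) r"

lemma intmul_0 [simp]: "intmul 0 r = 0" by (simp add: intmul_def)

lemma intmul_succ: "intmul (k+1) r = intmul k r + r"
proof (cases "k \<ge> 0")
  case True
  then have "nat (k+1) = Suc (nat k)" "nat (-(k+1)) = 0" "nat (-k) = 0" by auto
  then show ?thesis by (simp add: intmul_def)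
next
  case False
  then have "nat (k+1) = 0" "nat k = 0" "nat (-k) = Suc (nat (-(k+1)))" by auto
  then show ?thesis by (simp add: intmul_def algebra_simps)
qed

lemma intmul_pred: "intmul (k-1) r = intmul k r - r"
  using intmul_succ[of "k-1" r] by (simp add: algebra_simps)

lemma intmul_add: "intmul (k+l) r = intmul k r + intmul l r"
proof (induction l rule: int_induct[where k=0])
  case base then show ?case by simp
next
  case (step1 i)
  have "intmul (k + (i + 1)) r = intmul (k + i + 1) r" by (simp add: add.assoc)
  also have "\<dots> = intmul (k+i) r + r" by (rule intmul_succ)
  also have "\<dots> = intmul k r + (intmul i r + r)" using step1 by (simp add: add.assoc)
  finally show ?case by (simp add: intmul_succ)
next
  case (step2 i)
  have "intmul (k + (i - 1)) r = intmul (k + i - 1) r" by (simp add: algebra_simps)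
  also have "\<dots> = intmul (k+i) r - r" by (rule intmul_pred)
  also have "\<dots> = intmul k r + (intmul i r - r)" using step2 by (simp add: algebra_simps)
  finally show ?case by (simp add: intmul_pred)
qed

lemma intmul_1 [simp]: "intmul 1 r = r" using intmul_succ[of 0 r] by simp

lemma intmul_neg: "intmul (-k) r = - intmul k r" by (simp add: intmul_def)

lemma intmul_diff: "intmul (k-l) r = intmul k r - intmul l r"
  using intmul_add[of k "-l" r] by (simp add: intmul_neg)

definition ev :: "('a \<Rightarrow> 'r::comm_ring) \<Rightarrow> ('a \<Rightarrow>\<^sub>0 int) \<Rightarrow> 'r" where
  "ev f x = (\<Sum>U\<in>Poly_Mapping.keys x. intmul (Poly_Mapping.lookup x U) (f U))"

lemma ev_superset:
  assumes "finite A" "Poly_Mapping.keys x \<subseteq> A"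
  shows "ev f x = (\<Sum>U\<in>A. intmul (Poly_Mapping.lookup x U) (f U))"
  unfolding ev_def
  by (rule sum.mono_neutral_left) (auto simp: assms in_keys_iff)

lemma ev_zero [simp]: "ev f 0 = 0" by (simp add: ev_def)

lemma ev_of [simp]: "ev f (frag_of U) = f U" by (simp add: ev_def)

lemma ev_diff: "ev f (a - b) = ev f a - ev f b"
proof -
  let ?A = "Poly_Mapping.keys a \<union> Poly_Mapping.keys b"
  have "ev f (a - b) = (\<Sum>U\<in>?A. intmul (Poly_Mapping.lookup (a-b) U) (f U))"
    by (rule ev_superset) (use keys_diff[of a b] in auto)
  also have "\<dots> = (\<Sum>U\<in>?A. intmul (Poly_Mapping.lookup a U) (f U)) - (\<Sum>U\<in>?A. intmul (Poly_Mapping.lookup b U) (f U))"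
    by (simp add: lookup_minus intmul_diff sum_subtractf)
  also have "\<dots> = ev f a - ev f b"
    by (simp add: ev_superset[symmetric])
  finally show ?thesis .
qed

lemma ev_neg: "ev f (- a) = - ev f a"
  using ev_diff[of f 0 a] by simp

lemma ev_add: "ev f (a + b) = ev f a + ev f b"
  using ev_diff[of f a "-b"] by (simp add: ev_neg)

lemma frag_cmul_single: "frag_cmul c (Poly_Mapping.single W d) = Poly_Mapping.single W (c*d)"
  by (rule poly_mapping_eqI) (simp add: lookup_single when_def)

lemma free_eq: "free_motive_prod x y = frag_extend (\<lambda>U. frag_extend (\<lambda>V. frag_of (inf U V)) y) x"
  unfolding free_motive_prod_def frag_extend_def
  by (simp add: frag_cmul_sum frag_cmul_single)

lemma frag_extend_fun_diff: "frag_extend (\<lambda>i. f i - g i) c = frag_extend f c - frag_extend g c"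
  using subset_UNIV
  by (induction c rule: frag_induction) (auto simp: frag_extend_diff)

lemma free_diff_left: "free_motive_prod (a - b) y = free_motive_prod a y - free_motive_prod b y"
  by (simp add: free_eq frag_extend_diff)

lemma free_diff_right: "free_motive_prod x (a - b) = free_motive_prod x a - free_motive_prod x b"
  by (simp add: free_eq frag_extend_diff frag_extend_fun_diff)

lemma free_zero_left [simp]: "free_motive_prod 0 y = 0" by (simp add: free_eq)
lemma free_zero_right [simp]: "free_motive_prod x 0 = 0"
  using free_diff_right[of x 0 0] by simp

lemma free_add_left: "free_motive_prod (a + b) y = free_motive_prod a y + free_motive_prod b y"
  using free_diff_left[of a "-b" y] free_diff_left[of 0 b y] by simp
lemma free_add_right: "free_motive_prod x (a + b) = free_motive_prod x a + free_motive_prod x b"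
  using free_diff_right[of x a "-b"] free_diff_right[of x 0 b] by simp
lemma free_neg_left: "free_motive_prod (- a) y = - free_motive_prod a y"
  using free_diff_left[of 0 a y] by simp

lemma free_of_of [simp]: "free_motive_prod (frag_of U) (frag_of V) = frag_of (inf U V)"
  by (simp add: free_eq)

lemma free_comm: "free_motive_prod x y = free_motive_prod y x"
proof -
  have "\<forall>y. free_motive_prod x y = free_motive_prod y x"
    using subset_UNIV
  proof (induction x rule: frag_induction)
    case (one U)
    show ?case
    proof
      fix y :: "'a \<Rightarrow>\<^sub>0 int"
      show "free_motive_prod (frag_of U) y = free_motive_prod y (frag_of U)"
        using subset_UNIV
        by (induction y rule: frag_induction) (auto simp: free_diff_left free_diff_right inf_commute)
    qed
  qed (auto simp: free_diff_left free_diff_right)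
  then show ?thesis by blast
qed

lemma free_assoc: "free_motive_prod (free_motive_prod x y) z = free_motive_prod x (free_motive_prod y z)"
proof -
  have "\<forall>y z. free_motive_prod (free_motive_prod x y) z = free_motive_prod x (free_motive_prod y z)"
    using subset_UNIV
  proof (induction x rule: frag_induction)
    case (one U)
    have "\<forall>z. free_motive_prod (free_motive_prod (frag_of U) y) z = free_motive_prod (frag_of U) (free_motive_prod y z)" for y
      using subset_UNIV
    proof (induction y rule: frag_induction)
      case (one V)
      show ?case
      proof
        fix z :: "'a \<Rightarrow>\<^sub>0 int"
        show "free_motive_prod (free_motive_prod (frag_of U) (frag_of V)) z = free_motive_prod (frag_of U) (free_motive_prod (frag_of V) z)"
          using subset_UNIV
          by (induction z rule: frag_induction) (auto simp: free_diff_left free_diff_right inf_assoc)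
      qed
    qed (auto simp: free_diff_left free_diff_right)
    then show ?case by blast
  qed (auto simp: free_diff_left free_diff_right)
  then show ?thesis by blast
qed

lemma hom_inf: "lat_hom_to_Idem f \<Longrightarrow> f (inf U V) = f U * f V"
  by (simp add: lat_hom_to_Idem_def idem_meet_def)

lemma ev_free:
  assumes "lat_hom_to_Idem f"
  shows "ev f (free_motive_prod x y) = ev f x * ev f y"
proof -
  have "\<forall>y. ev f (free_motive_prod x y) = ev f x * ev f y"
    using subset_UNIV
  proof (induction x rule: frag_induction)
    case (one U)
    show ?case
    proof
      fix y :: "'a \<Rightarrow>\<^sub>0 int"
      show "ev f (free_motive_prod (frag_of U) y) = ev f (frag_of U) * ev f y"
        using subset_UNIV
        by (induction y rule: frag_induction)
          (auto simp: free_diff_left free_diff_right ev_diff algebra_simps hom_inf[OF assms] mult.commute)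
    qed
  qed (auto simp: free_diff_left free_diff_right ev_diff algebra_simps)
  then show ?thesis by blast
qed


lemma rel_diff: "x \<in> motive_rel \<Longrightarrow> y \<in> motive_rel \<Longrightarrow> x - y \<in> motive_rel"
  using motive_rel.add[OF _ motive_rel.neg, of x y] by simp

lemma equiv_motive: "equiv UNIV (motive_equiv :: (('a::{distrib_lattice,order_bot} \<Rightarrow>\<^sub>0 int) \<times> _) set)"
proof (rule equivI)
  show "refl (motive_equiv :: (('a \<Rightarrow>\<^sub>0 int) \<times> _) set)"
    by (rule reflI) (simp add: motive_equiv_def motive_rel.zero)
  show "sym (motive_equiv :: (('a \<Rightarrow>\<^sub>0 int) \<times> _) set)"
    by (rule symI) (metis (mono_tags) case_prodD case_prodI mem_Collect_eq minus_diff_eq motive_equiv_def motive_rel.neg)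
  show "trans (motive_equiv :: (('a \<Rightarrow>\<^sub>0 int) \<times> _) set)"
  proof (rule transI)
    fix x y z :: "'a \<Rightarrow>\<^sub>0 int"
    assume "(x, y) \<in> motive_equiv" "(y, z) \<in> motive_equiv"
    then have "x - y \<in> motive_rel" "y - z \<in> motive_rel" by (simp_all add: motive_equiv_def)
    then have "(x - y) + (y - z) \<in> motive_rel" by (rule motive_rel.add)
    then show "(x, z) \<in> motive_equiv" by (simp add: motive_equiv_def)
  qed
qed auto

lemma abs_eq_iff: "abs_motive x = abs_motive y \<longleftrightarrow> x - y \<in> motive_rel"
proof -
  have "abs_motive x = abs_motive y \<longleftrightarrow> motive_equiv `` {x} = motive_equiv `` {y}"
    unfolding abs_motive_def
    by (rule Abs_motive_inject) (auto intro: quotientI)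
  also have "\<dots> \<longleftrightarrow> (x, y) \<in> motive_equiv"
    by (rule eq_equiv_class_iff[OF equiv_motive]) auto
  finally show ?thesis by (simp add: motive_equiv_def)
qed

lemma abs_rep [simp]: "abs_motive (rep_motive a) = a"
proof -
  have "Rep_motive a \<in> UNIV // motive_equiv" by (rule Rep_motive)
  then obtain x where x: "Rep_motive a = motive_equiv `` {x}" by (auto elim: quotientE)
  have "x \<in> Rep_motive a" using x by (simp add: motive_equiv_def motive_rel.zero)
  then have "rep_motive a \<in> Rep_motive a" unfolding rep_motive_def by (rule someI)
  then have "(x, rep_motive a) \<in> motive_equiv" using x by simp
  then have "motive_equiv `` {rep_motive a} = motive_equiv `` {x}"
    by (metis equiv_class_eq equiv_motive)
  then have "Rep_motive a = motive_equiv `` {rep_motive a}" using x by simp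
  then show ?thesis unfolding abs_motive_def by (metis Rep_motive_inverse)
qed

lemma rep_abs: "rep_motive (abs_motive x) - x \<in> motive_rel"
  using abs_rep[of "abs_motive x"] abs_eq_iff by blast

lemma motive_cases: "(\<And>x. a = abs_motive x \<Longrightarrow> P) \<Longrightarrow> P"
  using abs_rep by metis

lemma plus_abs [simp]: "motive_plus (abs_motive x) (abs_motive y) = abs_motive (x + y)"
  unfolding motive_plus_def abs_eq_iff
  using motive_rel.add[OF rep_abs[of x] rep_abs[of y]] by (simp add: algebra_simps)

lemma uminus_abs [simp]: "motive_uminus (abs_motive x) = abs_motive (- x)"
  unfolding motive_uminus_def abs_eq_iff
  using motive_rel.neg[OF rep_abs[of x]] by (simp add: algebra_simps)

lemma minus_abs [simp]: "motive_minus (abs_motive x) (abs_motive y) = abs_motive (x - y)"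
  unfolding motive_minus_def abs_eq_iff
  using rel_diff[OF rep_abs[of x] rep_abs[of y]] by (simp add: algebra_simps)

lemma gen_rel: "frag_of U + frag_of V - frag_of (sup U V) - frag_of (inf U V) \<in> motive_rel"
  by (rule motive_rel.mv)

lemma free_rel: "r \<in> motive_rel \<Longrightarrow> free_motive_prod r z \<in> motive_rel"
proof (induction r arbitrary: z rule: motive_rel.induct)
  case zero then show ?case by (simp add: motive_rel.zero)
next
  case bot
  show ?case using subset_UNIV
  proof (induction z rule: frag_induction)
    case zero then show ?case by (simp add: motive_rel.zero)
  next
    case (one x)
    have "inf bot x = bot" by (simp add: inf_absorb1)
    then show ?case by (simp add: motive_rel.bot)
  next
    case (diff a b) then show ?case by (simp add: free_diff_right rel_diff)
  qed
next
  case (mv U V)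
  show ?case using subset_UNIV
  proof (induction z rule: frag_induction)
    case zero then show ?case by (simp add: motive_rel.zero)
  next
    case (one W)
    have "free_motive_prod (frag_of U + frag_of V - frag_of (sup U V) - frag_of (inf U V)) (frag_of W)
       = frag_of (inf U W) + frag_of (inf V W) - frag_of (sup (inf U W) (inf V W)) - frag_of (inf (inf U W) (inf V W))"
    proof -
      have h1: "inf (sup U V) W = sup (inf U W) (inf V W)" by (rule inf_sup_distrib2)
      have h2: "inf (inf U V) W = inf (inf U W) (inf V W)"
        by (metis inf_assoc inf_commute inf_idem inf_left_commute)
      show ?thesis by (simp only: free_diff_left free_add_left free_of_of h1 h2)
    qed
    then show ?case using gen_rel by metis
  next
    case (diff a b) then show ?case by (simp add: free_diff_right rel_diff)
  qed
next
  case (add x y) then show ?case by (simp add: free_add_left motive_rel.add)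
next
  case (neg x) then show ?case by (simp add: free_neg_left motive_rel.neg)
qed

lemma times_abs [simp]: "motive_times (abs_motive x) (abs_motive y) = abs_motive (free_motive_prod x y)"
proof -
  let ?x = "rep_motive (abs_motive x)" and ?y = "rep_motive (abs_motive y)"
  have "free_motive_prod ?x ?y - free_motive_prod x y
      = free_motive_prod (?x - x) ?y + free_motive_prod (?y - y) x"
    by (simp add: free_diff_left free_diff_right free_comm[of x] algebra_simps)
  also have "\<dots> \<in> motive_rel"
    by (intro motive_rel.add free_rel rep_abs)
  finally show ?thesis unfolding motive_times_def abs_eq_iff .
qed

lemma zero_abs: "motive_zero = abs_motive 0" by (simp add: motive_zero_def)
lemma cls_abs: "motive_cls U = abs_motive (frag_of U)" by (simp add: motive_cls_def)

lemma comm_ring_motive: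
  "class.comm_ring motive_plus (motive_zero :: 'a::{distrib_lattice,order_bot} motive) motive_minus motive_uminus motive_times"
proof (unfold_locales)
  fix a b c :: "'a motive"
  show "motive_plus (motive_plus a b) c = motive_plus a (motive_plus b c)"
    by (cases a rule: motive_cases, cases b rule: motive_cases, cases c rule: motive_cases) (simp add: add.assoc)
  show "motive_plus a b = motive_plus b a"
    by (cases a rule: motive_cases, cases b rule: motive_cases) (simp add: add.commute)
  show "motive_plus motive_zero a = a"
    by (cases a rule: motive_cases) (simp add: zero_abs)
  show "motive_plus (motive_uminus a) a = motive_zero"
    by (cases a rule: motive_cases) (simp add: zero_abs)
  show "motive_minus a b = motive_plus a (motive_uminus b)"
    by (cases a rule: motive_cases, cases b rule: motive_cases) simp
  show "motive_times (motive_times a b) c = motive_times a (motive_times b c)"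
    by (cases a rule: motive_cases, cases b rule: motive_cases, cases c rule: motive_cases) (simp add: free_assoc)
  show "motive_times a b = motive_times b a"
    by (cases a rule: motive_cases, cases b rule: motive_cases) (simp add: free_comm)
  show "motive_times (motive_plus a b) c = motive_plus (motive_times a c) (motive_times b c)"
    by (cases a rule: motive_cases, cases b rule: motive_cases, cases c rule: motive_cases) (simp add: free_add_left)
qed

lemma idem_lattice: "lb_distrib_lattice_on (Idem :: 'r::comm_ring set) idem_meet idem_join 0"
  unfolding lb_distrib_lattice_on_def Idem_def idem_meet_def idem_join_def
  apply (intro conjI ballI)
  apply (auto simp: algebra_simps)
  apply (simp_all add: mult.assoc[symmetric])
  done


lemma ev_rel: "r \<in> motive_rel \<Longrightarrow> lat_hom_to_Idem f \<Longrightarrow> ev f r = 0"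
proof (induction r rule: motive_rel.induct)
  case bot then show ?case by (simp add: lat_hom_to_Idem_def)
next
  case (mv U V) then show ?case
    by (simp add: ev_diff ev_add lat_hom_to_Idem_def idem_meet_def idem_join_def)
next
  case (add x y) then show ?case by (simp add: ev_add)
next
  case (neg x) then show ?case by (simp add: ev_neg)
qed simp

lemma ev_rep_abs: "lat_hom_to_Idem f \<Longrightarrow> ev f (rep_motive (abs_motive x)) = ev f x"
  using ev_rel[OF rep_abs[of x], of f] by (simp add: ev_diff)

lemma universal:
  fixes f :: "'a::{distrib_lattice,order_bot} \<Rightarrow> 'r::comm_ring"
  assumes hf: "lat_hom_to_Idem f"
  shows "\<exists>!\<phi> :: 'a motive \<Rightarrow> 'r. motive_ring_hom \<phi> \<and> (\<forall>U. \<phi> (motive_cls U) = f U)"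
proof (rule ex1I)
  let ?phi = "\<lambda>a. ev f (rep_motive a)"
  show "motive_ring_hom ?phi \<and> (\<forall>U. ?phi (motive_cls U) = f U)"
    unfolding motive_ring_hom_def motive_plus_def motive_times_def motive_cls_def
    by (simp add: ev_rep_abs[OF hf] ev_add ev_free[OF hf])
  fix \<psi> :: "'a motive \<Rightarrow> 'r"
  assume "motive_ring_hom \<psi> \<and> (\<forall>U. \<psi> (motive_cls U) = f U)"
  then have hp: "\<And>a b. \<psi> (motive_plus a b) = \<psi> a + \<psi> b" and hc: "\<And>U. \<psi> (abs_motive (frag_of U)) = f U"
    by (auto simp: motive_ring_hom_def cls_abs)
  have key: "\<psi> (abs_motive x) = ev f x" for x
    using subset_UNIV
  proof (induction x rule: frag_induction)
    case zero
    have "\<psi> (abs_motive 0) = \<psi> (abs_motive 0) + \<psi> (abs_motive 0)"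
      using hp[of "abs_motive 0" "abs_motive 0"] by simp
    then show ?case by simp
  next
    case (one U) then show ?case by (simp add: hc)
  next
    case (diff a b)
    have "\<psi> (abs_motive a) = \<psi> (abs_motive (a - b)) + \<psi> (abs_motive b)"
      using hp[of "abs_motive (a - b)" "abs_motive b"] by simp
    then show ?case using diff by (simp add: ev_diff algebra_simps)
  qed
  show "\<psi> = ?phi"
  proof
    fix a show "\<psi> a = ?phi a" using key[of "rep_motive a"] by simp
  qed
qed

theorem theorem3p38:
  fixes D_witness :: "'a::{distrib_lattice,order_bot} itself"
    and R_witness :: "'r::comm_ring itself"
  shows "class.comm_ring motive_plus motive_zero motive_minus motive_uminus motive_times
           \<and> (\<forall>U V::'a. motive_times (motive_cls U) (motive_cls V) = motive_cls (inf U V))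
           \<and> lb_distrib_lattice_on (Idem :: 'r set) idem_meet idem_join 0
           \<and> (\<forall>U::'a. motive_cls U \<in> {p. motive_times p p = p})
           \<and> motive_cls (bot::'a) = motive_zero
           \<and> (\<forall>U V::'a. motive_cls (sup U V) =
                 motive_minus (motive_plus (motive_cls U) (motive_cls V)) (motive_times (motive_cls U) (motive_cls V)))
           \<and> (\<forall>f :: 'a \<Rightarrow> 'r. lat_hom_to_Idem f \<longrightarrow>
                 (\<exists>!\<phi> :: 'a motive \<Rightarrow> 'r. motive_ring_hom \<phi> \<and> (\<forall>U. \<phi> (motive_cls U) = f U)))"
proof -
  have A: "class.comm_ring motive_plus (motive_zero :: 'a motive) motive_minus motive_uminus motive_times"
    by (rule comm_ring_motive)
  have B: "lb_distrib_lattice_on (Idem :: 'r set) idem_meet idem_join 0" by (rule idem_lattice)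
  have C: "motive_times (motive_cls U) (motive_cls V) = motive_cls (inf U V)" for U V :: 'a
    by (simp add: cls_abs)
  have D: "motive_cls U \<in> {p. motive_times p p = p}" for U :: 'a
    by (simp add: cls_abs)
  have E: "motive_cls (bot::'a) = motive_zero"
    by (simp add: cls_abs zero_abs abs_eq_iff motive_rel.bot)
  have F: "motive_cls (sup U V) =
                 motive_minus (motive_plus (motive_cls U) (motive_cls V)) (motive_times (motive_cls U) (motive_cls V))"
    for U V :: 'a
  proof -
    have "frag_of (sup U V) - (frag_of U + frag_of V - frag_of (inf U V))
        = - (frag_of U + frag_of V - frag_of (sup U V) - frag_of (inf U V))"
      by (simp add: algebra_simps)
    also have "\<dots> \<in> motive_rel" by (intro motive_rel.neg motive_rel.mv)
    finally show ?thesis by (simp add: cls_abs abs_eq_iff)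
  qed
  have G: "\<forall>f :: 'a \<Rightarrow> 'r. lat_hom_to_Idem f \<longrightarrow>
                 (\<exists>!\<phi> :: 'a motive \<Rightarrow> 'r. motive_ring_hom \<phi> \<and> (\<forall>U. \<phi> (motive_cls U) = f U))"
    using universal by blast
  show ?thesis
    apply (intro conjI allI)
    apply (rule comm_ring_motive)
    apply (rule C)
    apply (rule B)
    apply (rule D)
    apply (rule E)
    apply (rule F)
    using G apply blast
    done
qed

end
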